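(* Let $p\ge 2$ and let $J$ be a periodic Jacobi operator on $\ell^2(\mathbb{Z})$ with period $p$, given by $(J\psi)_n=a_{n-1}\psi_{n-1}+b_n\psi_n+a_n\psi_{n+1}$, where $a_n>0$, $b_n\in\mathbb{R}$, $a_{n+p}=a_n$, $b_{n+p}=b_n$ for all $n$. Let $A:=(a_1\cdots a_p)^{1/p}$, $s:=\lambda_p^{\max}-\lambda_1^{\min}$, and let $\sigma_1,\dots,\sigma_p$ be the spectral bands of $J$. Then $$\frac{4A^p}{s^{p-1}}\le\max_{1\le n\le p}|\sigma_n|.$$
   Context: Spectral structure: the spectrum of $J$ is $\sigma(J)=\{\lambda\in\mathbb{R}: |\Delta(\lambda)|\le 2\}$, where $\Delta(\lambda)=\operatorname{tr}\big(A_p(\lambda)A_{p-1}(\lambda)\cdots A_1(\lambda)\big)$ with $A_n(\lambda)=\begin{pmatrix}(\lambda-b_n)/a_n & -a_{n-1}/a_n\\ 1&0\end{pmatrix}$ (the discriminant, a real polynomial of degree $p$). It is a standard fact that this set is a union of $p$ closed intervals (bands) $\sigma_n=[\lambda_n^{\min},\lambda_n^{\max}]$, $1\le n\le p$, with $\lambda_n^{\min}<\lambda_n^{\max}\le\lambda_{n+1}^{\min}$ (bands may touch but do not overlap); on each band $\Delta$ is monotone and maps it onto $[-2,2]$. The spectral gaps are $\gamma_n=(\lambda_n^{\max},\lambda_{n+1}^{\min})$, $1\le n\le p-1$ (possibly empty). $|\cdot|$ denotes Lebesgue measure (length). *)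

theory Defs
  imports "HOL-Analysis.Analysis"
begin

definition transfer_mat :: "(int \<Rightarrow> real) \<Rightarrow> (int \<Rightarrow> real) \<Rightarrow> real \<Rightarrow> int \<Rightarrow> real^2^2" where
  "transfer_mat a b lam n =
     vector [vector [(lam - b n) / a n, - a (n - 1) / a n], vector [1, 0]]"

fun transfer_prod :: "(int \<Rightarrow> real) \<Rightarrow> (int \<Rightarrow> real) \<Rightarrow> real \<Rightarrow> nat \<Rightarrow> real^2^2" where
  "transfer_prod a b lam 0 = mat 1"
| "transfer_prod a b lam (Suc k) = transfer_mat a b lam (int (Suc k)) ** transfer_prod a b lam k"

definition discriminant :: "(int \<Rightarrow> real) \<Rightarrow> (int \<Rightarrow> real) \<Rightarrow> nat \<Rightarrow> real \<Rightarrow> real" where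
  "discriminant a b p lam = trace (transfer_prod a b lam p)"

definition jacobi_spectrum :: "(int \<Rightarrow> real) \<Rightarrow> (int \<Rightarrow> real) \<Rightarrow> nat \<Rightarrow> real set" where
  "jacobi_spectrum a b p = {lam. \<bar>discriminant a b p lam\<bar> \<le> 2}"

text \<open>lmin, lmax (indexed 1..p) are the band edges: sigma_n = [lmin n, lmax n], bands are ordered,
  may touch but do not overlap, their union is the spectrum, and on each band Delta is monotone
  and maps it onto [-2,2].\<close>
definition spectral_bands ::
  "(int \<Rightarrow> real) \<Rightarrow> (int \<Rightarrow> real) \<Rightarrow> nat \<Rightarrow> (nat \<Rightarrow> real) \<Rightarrow> (nat \<Rightarrow> real) \<Rightarrow> bool" where
  "spectral_bands a b p lmin lmax \<longleftrightarrow>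
     (\<forall>n\<in>{1..p}. lmin n < lmax n) \<and>
     (\<forall>n\<in>{1..<p}. lmax n \<le> lmin (Suc n)) \<and>
     jacobi_spectrum a b p = (\<Union>n\<in>{1..p}. {lmin n..lmax n}) \<and>
     (\<forall>n\<in>{1..p}. discriminant a b p ` {lmin n..lmax n} = {-2..2} \<and>
        (mono_on {lmin n..lmax n} (discriminant a b p) \<or>
         antimono_on {lmin n..lmax n} (discriminant a b p)))"

end

theory Submission imports Defs "HOL-Computational_Algebra.Polynomial" begin

fun PM :: "(int\<Rightarrow>real)\<Rightarrow>(int\<Rightarrow>real)\<Rightarrow>nat\<Rightarrow> real poly \<times> real poly \<times> real poly \<times> real poly" where
  "PM a b 0 = (1,0,0,1)"
| "PM a b (Suc k) = (case PM a b k of (m11,m12,m21,m22) \<Rightarrow>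
     (smult (1 / a (int (Suc k))) [:- b (int (Suc k)), 1:] * m11 + smult (- a (int k) / a (int (Suc k))) m21,
      smult (1 / a (int (Suc k))) [:- b (int (Suc k)), 1:] * m12 + smult (- a (int k) / a (int (Suc k))) m22,
      m11, m12))"

lemma PM_eval:
  "transfer_prod a b lam k $ 1 $ 1 = poly (fst (PM a b k)) lam \<and>
   transfer_prod a b lam k $ 1 $ 2 = poly (fst (snd (PM a b k))) lam \<and>
   transfer_prod a b lam k $ 2 $ 1 = poly (fst (snd (snd (PM a b k)))) lam \<and>
   transfer_prod a b lam k $ 2 $ 2 = poly (snd (snd (snd (PM a b k)))) lam"
proof (induction k)
  case 0
  then show ?case by (simp add: mat_def)
next
  case (Suc k)
  obtain m11 m12 m21 m22 where e: "PM a b k = (m11,m12,m21,m22)" by (cases "PM a b k") auto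
  show ?case using Suc e
    apply (simp add: matrix_matrix_mult_def transfer_mat_def UNIV_2)
    by (simp add: add_divide_distrib[symmetric] algebra_simps)
qed

lemma PM_deg:
  assumes "\<And>n. a n > 0"
  shows "degree (fst (PM a b k)) = k \<and> lead_coeff (fst (PM a b k)) = 1 / (\<Prod>i=1..k. a (int i)) \<and>
    degree (fst (snd (PM a b k))) \<le> k \<and> degree (fst (snd (snd (PM a b k)))) \<le> k \<and>
    degree (snd (snd (snd (PM a b k)))) \<le> k \<and> (k \<ge> 1 \<longrightarrow> degree (snd (snd (snd (PM a b k)))) < k)"
proof (induction k)
  case 0
  then show ?case by simp
next
  case (Suc k)
  obtain m11 m12 m21 m22 where e: "PM a b k = (m11,m12,m21,m22)" by (cases "PM a b k") auto
  have ak: "a (int (Suc k)) \<noteq> 0" using assms[of "int (Suc k)"] by simp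
  define t where "t = smult (1 / a (int (Suc k))) [:- b (int (Suc k)), 1:]"
  have dt: "degree t = 1" "lead_coeff t = 1 / a (int (Suc k))" using ak by (auto simp: t_def)
  have m11: "degree m11 = k" "lead_coeff m11 = 1 / (\<Prod>i=1..k. a (int i))"
    and d: "degree m12 \<le> k" "degree m21 \<le> k" "degree m22 \<le> k" using Suc e by auto
  have pnz: "(\<Prod>i=1..k. a (int i)) \<noteq> 0" using assms by (simp add: prod_pos less_imp_neq[symmetric])
  have m11nz: "m11 \<noteq> 0" using m11 pnz by auto
  have tnz: "t \<noteq> 0" using dt by auto
  have dtm: "degree (t * m11) = Suc k" using degree_mult_eq[OF tnz m11nz] dt m11 by simp
  have d2: "degree (smult (- a (int k) / a (int (Suc k))) m21) < degree (t * m11)"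
    using d dtm order_trans[OF degree_smult_le[of _ m21] d(2)] by simp
  have A: "degree (t * m11 + smult (- a (int k) / a (int (Suc k))) m21) = Suc k"
    using degree_add_eq_left[OF d2] dtm by simp
  have B: "lead_coeff (t * m11 + smult (- a (int k) / a (int (Suc k))) m21) = 1 / (\<Prod>i=1..Suc k. a (int i))"
    using lead_coeff_add_le[OF d2] lead_coeff_mult[of t m11] dt m11 by (simp add: prod.nat_ivl_Suc' mult.commute)
  have C: "degree (t * m12 + smult (- a (int k) / a (int (Suc k))) m22) \<le> Suc k"
    by (rule degree_add_le) (use degree_mult_le[of t m12] dt d degree_smult_le[of _ m22] in auto)
  have E: "PM a b (Suc k) = (t * m11 + smult (- a (int k) / a (int (Suc k))) m21,
      t * m12 + smult (- a (int k) / a (int (Suc k))) m22, m11, m12)" by (simp add: e t_def)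
  show ?case unfolding E fst_conv snd_conv using A B C d m11 by auto
qed

lemma disc_poly:
  assumes "\<And>n. a n > 0" "p \<ge> 1"
  shows "\<exists>P. (\<forall>x. poly P x = discriminant a b p x) \<and> degree P = p \<and>
     lead_coeff P = 1 / (\<Prod>i=1..p. a (int i))"
proof -
  define P where "P = fst (PM a b p) + snd (snd (snd (PM a b p)))"
  have D: "degree (fst (PM a b p)) = p" "lead_coeff (fst (PM a b p)) = 1 / (\<Prod>i=1..p. a (int i))"
     "degree (snd (snd (snd (PM a b p)))) < p" using PM_deg[where a=a and b=b and k=p] assms by auto
  have "degree P = p" unfolding P_def using degree_add_eq_left[of "snd (snd (snd (PM a b p)))" "fst (PM a b p)"] D
    by (simp add: add.commute)
  moreover have "lead_coeff P = 1 / (\<Prod>i=1..p. a (int i))" unfolding P_def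
    using lead_coeff_add_le[of "snd (snd (snd (PM a b p)))" "fst (PM a b p)"] D by (simp add: add.commute)
  moreover have "\<forall>x. poly P x = discriminant a b p x"
    using PM_eval[of a b _ p] by (simp add: P_def discriminant_def trace_def UNIV_2)
  ultimately show ?thesis by blast
qed

lemma chain:
  assumes H1: "\<forall>n\<in>{1..p}. lmin n < (lmax n::real)" and H2: "\<forall>n\<in>{1..<p}. lmax n \<le> lmin (Suc n)"
  shows "1 \<le> j \<Longrightarrow> j + Suc d \<le> p \<Longrightarrow> lmax j \<le> lmin (j + Suc d)"
proof (induction d)
  case 0
  then show ?case using H2 by auto
next
  case (Suc d)
  have "lmax j \<le> lmin (j + Suc d)" using Suc by auto
  also have "\<dots> < lmax (j + Suc d)" using H1 Suc.prems by auto
  also have "\<dots> \<le> lmin (j + Suc (Suc d))" using H2 Suc.prems by auto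
  finally show ?case by simp
qed

lemma chain2:
  assumes H1: "\<forall>n\<in>{1..p}. lmin n < (lmax n::real)" and H2: "\<forall>n\<in>{1..<p}. lmax n \<le> lmin (Suc n)"
    and "1 \<le> j" "j < k" "k \<le> p"
  shows "lmax j \<le> lmin k"
  using chain[OF H1 H2, of j "k - j - 1"] assms by auto

theorem corollary1p2:
  fixes a b :: "int \<Rightarrow> real" and p :: nat and lmin lmax :: "nat \<Rightarrow> real"
  assumes "p \<ge> 2"
    and "\<And>n. a n > 0"
    and "\<And>n. a (n + int p) = a n"
    and "\<And>n. b (n + int p) = b n"
    and "spectral_bands a b p lmin lmax"
  shows "4 * (root p (\<Prod>k=1..int p. a k)) ^ p / (lmax p - lmin 1) ^ (p - 1)
           \<le> Max ((\<lambda>n. lmax n - lmin n) ` {1..p})"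
proof -
  define D where "D = discriminant a b p"
  have H1: "\<forall>n\<in>{1..p}. lmin n < lmax n" and H2: "\<forall>n\<in>{1..<p}. lmax n \<le> lmin (Suc n)"
    and H3: "\<forall>n\<in>{1..p}. D ` {lmin n..lmax n} = {-2..2} \<and>
        (mono_on {lmin n..lmax n} D \<or> antimono_on {lmin n..lmax n} D)"
    using assms(5) unfolding spectral_bands_def D_def by auto
  define Pr where "Pr = (\<Prod>i=1..p. a (int i))"
  have Pipos: "Pr > 0" unfolding Pr_def using assms(2) by (simp add: prod_pos)
  define L where "L = 1 / Pr"
  obtain P where P: "\<And>x. poly P x = D x" "degree P = p" "lead_coeff P = L"
    using disc_poly[where a=a and b=b and p=p] assms(1,2) unfolding D_def L_def Pr_def by auto
  define s where "s = lmax p - lmin 1"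
  define \<sigma> where "\<sigma> = lmax 1 - lmin 1"
  have p1: "1 \<in> {1..p}" "p \<in> {1..p}" using assms(1) by auto
  have lmax1p: "lmax 1 \<le> lmax p"
  proof -
    have "lmax 1 \<le> lmin p" using chain2[OF H1 H2, of 1 p] assms(1) by auto
    then show ?thesis using H1 p1 by force
  qed
  have bnd_lo: "lmin 1 \<le> lmin j" if "j \<in> {1..p}" for j
  proof (cases "j = 1")
    case False
    then have "lmax 1 \<le> lmin j" using chain2[OF H1 H2, of 1 j] that by auto
    then show ?thesis using H1 p1 by force
  qed simp
  have bnd_hi: "lmax j \<le> lmax p" if "j \<in> {1..p}" for j
  proof (cases "j = p")
    case False
    then have "lmax j \<le> lmin p" using chain2[OF H1 H2, of j p] that by auto
    then show ?thesis using H1 p1 by force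
  qed simp
  have endpt: "D (lmax j) = 2 \<or> D (lmax j) = -2" if "j \<in> {1..p}" for j
  proof -
    have I: "lmax j \<in> {lmin j..lmax j}" using H1 that by force
    have img: "D ` {lmin j..lmax j} = {-2..2}" using H3 that by auto
    then have r: "-2 \<le> D (lmax j)" "D (lmax j) \<le> 2" using I by auto
    have "2 \<in> D ` {lmin j..lmax j}" "-2 \<in> D ` {lmin j..lmax j}" unfolding img by auto
    then obtain y1 y2 where y1: "y1 \<in> {lmin j..lmax j}" "D y1 = 2"
      and y2: "y2 \<in> {lmin j..lmax j}" "D y2 = -2" by (metis imageE)
    have "mono_on {lmin j..lmax j} D \<or> antimono_on {lmin j..lmax j} D" using H3 that by auto
    then show ?thesis
    proof
      assume "mono_on {lmin j..lmax j} D"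
      then have "D y1 \<le> D (lmax j)" using y1(1) I unfolding monotone_on_def by (meson atLeastAtMost_iff)
      then show ?thesis using y1 r by auto
    next
      assume "antimono_on {lmin j..lmax j} D"
      then have "D (lmax j) \<le> D y2" using y2(1) I unfolding monotone_on_def by (meson atLeastAtMost_iff)
      then show ?thesis using y2 r by auto
    qed
  qed
  have spos: "s > 0" unfolding s_def using lmax1p H1 p1 by force
  have sig0: "\<sigma> \<ge> 0" unfolding \<sigma>_def using H1 p1 by force
  have key: "2 + c \<le> L * \<sigma> * s ^ (p - 1)" if c: "-2 < c" "c < 2" for c
  proof -
    have "\<forall>j\<in>{1..p}. \<exists>y. y \<in> {lmin j..lmax j} \<and> D y = c"
    proof
      fix j assume "j \<in> {1..p}"
      then have "c \<in> D ` {lmin j..lmax j}" using H3 c by auto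
      then show "\<exists>y. y \<in> {lmin j..lmax j} \<and> D y = c" by auto
    qed
    then obtain x where x: "\<And>j. j \<in> {1..p} \<Longrightarrow> x j \<in> {lmin j..lmax j} \<and> D (x j) = c"
      by metis
    have neq: "x j \<noteq> x k" if "j \<in> {1..p}" "k \<in> {1..p}" "j < k" for j k
    proof
      assume e: "x j = x k"
      have "x j \<le> lmax j" "lmax j \<le> lmin k" "lmin k \<le> x k"
        using x[OF that(1)] x[OF that(2)] chain2[OF H1 H2, of j k] that by auto
      then have "x j = lmax j" using e by auto
      then show False using endpt[OF that(1)] x[OF that(1)] c by auto
    qed
    have inj: "inj_on x {1..p}"
      unfolding inj_on_def by (metis neq linorder_neqE_nat)
    define R where "R = (\<Prod>j\<in>{1..p}. [:- x j, 1:])"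
    have dR: "degree R = p" unfolding R_def by (subst degree_prod_sum_eq) auto
    have lR: "lead_coeff R = 1" unfolding R_def lead_coeff_prod by simp
    define Q where "Q = P - [:c:] - smult L R"
    have c0: "coeff [:c:] p = 0" using assms(1) by (cases p) auto
    have cQ: "coeff Q p = 0" unfolding Q_def using P dR lR c0 by simp
    have dQ: "degree Q \<le> p" unfolding Q_def
      using P dR by (intro degree_diff_le degree_diff_le) auto
    have Q0: "Q = 0"
    proof (rule ccontr)
      assume nz: "Q \<noteq> 0"
      have "degree Q \<noteq> p" using cQ nz by (metis leading_coeff_0_iff)
      then have lt: "degree Q < p" using dQ by auto
      have roots: "x ` {1..p} \<subseteq> {y. poly Q y = 0}"
      proof
        fix y assume "y \<in> x ` {1..p}"
        then obtain j where j: "j \<in> {1..p}" "y = x j" by auto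
        have "poly R y = 0" unfolding R_def poly_prod using j
          by (intro prod_zero) auto
        then show "y \<in> {y. poly Q y = 0}" unfolding Q_def using P x[OF j(1)] j by simp
      qed
      have "card (x ` {1..p}) \<le> card {y. poly Q y = 0}"
        using roots poly_roots_finite[OF nz] by (intro card_mono)
      also have "\<dots> \<le> degree Q" by (rule card_poly_roots_bound[OF nz])
      finally show False using card_image[OF inj] lt by simp
    qed
    have fact: "D y - c = L * (\<Prod>j\<in>{1..p}. (y - x j))" for y
    proof -
      have "poly Q y = 0" using Q0 by simp
      then show ?thesis unfolding Q_def R_def using P by (simp add: poly_prod)
    qed
    have "-2 \<in> D ` {lmin 1..lmax 1}" using H3 p1 by auto
    then obtain u where u: "u \<in> {lmin 1..lmax 1}" "D u = -2" by auto
    have "2 + c = \<bar>D u - c\<bar>" using u c by simp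
    also have "\<dots> = L * (\<Prod>j\<in>{1..p}. \<bar>u - x j\<bar>)"
      unfolding fact abs_mult abs_prod using Pipos L_def by simp
    also have "(\<Prod>j\<in>{1..p}. \<bar>u - x j\<bar>) = \<bar>u - x 1\<bar> * (\<Prod>j\<in>{2..p}. \<bar>u - x j\<bar>)"
      using assms(1) by (simp add: prod.atLeast_Suc_atMost numeral_2_eq_2)
    also have "\<dots> \<le> \<sigma> * s ^ (p - 1)"
    proof (rule mult_mono)
      show "\<bar>u - x 1\<bar> \<le> \<sigma>" using u x[OF p1(1)] unfolding \<sigma>_def by auto
      have "(\<Prod>j\<in>{2..p}. \<bar>u - x j\<bar>) \<le> (\<Prod>j\<in>{2..p}. s)"
      proof (rule prod_mono)
        fix j assume j: "j \<in> {2..p}"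
        then have j1: "j \<in> {1..p}" by auto
        show "0 \<le> \<bar>u - x j\<bar> \<and> \<bar>u - x j\<bar> \<le> s"
          using x[OF j1] bnd_lo[OF j1] bnd_hi[OF j1] u lmax1p unfolding s_def by auto
      qed
      then show "(\<Prod>j\<in>{2..p}. \<bar>u - x j\<bar>) \<le> s ^ (p - 1)" by simp
    qed (use sig0 spos in \<open>auto intro: prod_nonneg\<close>)
    finally show ?thesis using Pipos L_def by (simp add: divide_right_mono mult.assoc)
  qed
  have K4: "4 \<le> L * \<sigma> * s ^ (p - 1)"
  proof (rule ccontr)
    define K where "K = L * \<sigma> * s ^ (p - 1)"
    assume "\<not> 4 \<le> L * \<sigma> * s ^ (p - 1)"
    then have "K < 4" unfolding K_def by simp
    moreover have "K \<ge> 0" unfolding K_def L_def using Pipos sig0 spos by simp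
    ultimately show False using key[of "K / 2"] unfolding K_def[symmetric] by simp
  qed
  have prodeq: "(\<Prod>k=1..int p. a k) = Pr"
  proof -
    have "(\<Prod>k=1..int p. a k) = (\<Prod>k\<in>int ` {1..p}. a k)" by (simp add: image_int_atLeastAtMost)
    also have "\<dots> = Pr" unfolding Pr_def by (subst prod.reindex) auto
    finally show ?thesis .
  qed
  have "4 * (root p (\<Prod>k=1..int p. a k)) ^ p / (lmax p - lmin 1) ^ (p - 1) = 4 * Pr / s ^ (p - 1)"
    unfolding prodeq s_def using Pipos assms(1) by simp
  also have "\<dots> \<le> \<sigma>"
  proof -
    have "4 * Pr \<le> \<sigma> * s ^ (p - 1)" using K4 Pipos unfolding L_def
      by (simp add: field_simps)
    then show ?thesis using spos by (simp add: pos_divide_le_eq)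
  qed
  also have "\<dots> \<le> Max ((\<lambda>n. lmax n - lmin n) ` {1..p})"
    unfolding \<sigma>_def using p1 by (intro Max_ge) auto
  finally show ?thesis .
qed

end
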